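(* Let $p$ be a prime, $\alpha\ge1$ and $\beta\ge0$. For every function $f:\mathbb{Z}_{p^\alpha}\to\mathbb{Z}$, $p^\beta$ divides $\Delta^{\beta(p^\alpha-1)+1}f(x)$ for all $x\in\mathbb{Z}_{p^\alpha}$.
   Context: For a function $f$ on $\mathbb{Z}_q=\mathbb{Z}/q\mathbb{Z}$ with values in $\mathbb{Z}$, $\Delta f(x):=f(x+1)-f(x)$ and $\Delta^k$ denotes the $k$-fold iterate. *)

theory Defs
  imports Main "HOL-Computational_Algebra.Primes"
begin

text \<open>Functions Z_q \<rightarrow> Z are represented as q-periodic functions int \<Rightarrow> int.\<close>

definition periodic_mod :: "int \<Rightarrow> (int \<Rightarrow> int) \<Rightarrow> bool" where
  "periodic_mod q f \<longleftrightarrow> (\<forall>x. f (x + q) = f x)"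

definition fdiff :: "(int \<Rightarrow> int) \<Rightarrow> (int \<Rightarrow> int)" where
  "fdiff f = (\<lambda>x. f (x + 1) - f x)"

end

theory Submission
  imports Defs
begin

lemma fdiff_pow_formula:
  "(fdiff ^^ n) u x = (\<Sum>k\<le>n. (-1)^(n-k) * int (n choose k) * u (x + int k))"
proof (induction n arbitrary: x)
  case 0 then show ?case by simp
next
  case (Suc n)
  have A: "(\<Sum>k\<le>n. (-1)^(n-k) * int (n choose k) * u (x + int k))
     = (-1)^n * u x + (\<Sum>k<n. (-1)^(n - Suc k) * int (n choose Suc k) * u (x + int (Suc k)))"
    by (subst sum.atMost_shift) simp
  have B: "(\<Sum>k\<le>n. (-1)^(n-k) * int (n choose Suc k) * u (x + int (Suc k)))
     = (\<Sum>k<n. (-1)^(n-k) * int (n choose Suc k) * u (x + int (Suc k)))"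
    by (simp add: lessThan_Suc_atMost[symmetric])
  have C: "(\<Sum>k<n. (-1)^(n-k) * int (n choose Suc k) * u (x + int (Suc k)))
     = - (\<Sum>k<n. (-1)^(n - Suc k) * int (n choose Suc k) * u (x + int (Suc k)))"
    unfolding sum_negf[symmetric]
  proof (rule sum.cong)
    fix k assume "k \<in> {..<n}"
    then have "n - k = Suc (n - Suc k)" by auto
    then show "(-1)^(n-k) * int (n choose Suc k) * u (x + int (Suc k))
      = - ((-1)^(n - Suc k) * int (n choose Suc k) * u (x + int (Suc k)))" by simp
  qed simp
  have "(fdiff ^^ Suc n) u x = (fdiff ^^ n) u (x+1) - (fdiff ^^ n) u x"
    by (simp add: fdiff_def)
  also have "\<dots> = (\<Sum>k\<le>n. (-1)^(n-k) * int (n choose k) * u (x + int (Suc k)))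
       - (\<Sum>k\<le>n. (-1)^(n-k) * int (n choose k) * u (x + int k))"
    by (simp add: Suc.IH add_ac)
  also have "\<dots> = (\<Sum>k\<le>Suc n. (-1)^(Suc n-k) * int (Suc n choose k) * u (x + int k))"
    apply (subst sum.atMost_Suc_shift)
    apply (simp add: distrib_left distrib_right sum.distrib A)
    using B C by simp
  finally show ?case .
qed

lemma prime_power_dvd_choose:
  fixes p a j :: nat
  assumes p: "prime p" and j: "0 < j" "j < p ^ a"
  shows "p dvd (p ^ a choose j)"
proof (rule ccontr)
  assume np: "\<not> p dvd (p ^ a choose j)"
  have "coprime p (p ^ a choose j)" using p np by (simp add: prime_imp_coprime)
  then have cop: "coprime (p ^ a) (p ^ a choose j)" by simp
  have "j * (p ^ a choose j) = p ^ a * (p ^ a - 1 choose (j - 1))"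
    using j by (metis Suc_pred' times_binomial_minus1_eq)
  then have "p ^ a dvd j * (p ^ a choose j)" by simp
  then have "p ^ a dvd j" using cop coprime_dvd_mult_left_iff by blast
  then show False using j by (simp add: nat_dvd_not_less)
qed

lemma choose_minus1_mod:
  fixes p a :: nat
  assumes p: "prime p" and k: "k < p ^ a"
  shows "int p dvd int (p ^ a - 1 choose k) - (-1) ^ k"
  using k
proof (induction k)
  case 0 then show ?case by simp
next
  case (Suc k)
  have q: "p ^ a = Suc (p ^ a - 1)" using Suc.prems by simp
  have pas: "int (p ^ a choose Suc k) = int (p ^ a - 1 choose k) + int (p ^ a - 1 choose Suc k)"
    by (subst q) simp
  have d: "int p dvd int (p ^ a choose Suc k)"
    using prime_power_dvd_choose[OF p, of "Suc k" a] Suc.prems by (simp add: int_dvd_int_iff)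
  have "int (p ^ a - 1 choose Suc k) - (-1) ^ Suc k
       = int (p ^ a choose Suc k) - (int (p ^ a - 1 choose k) - (-1) ^ k)"
    using pas by simp
  moreover have "int p dvd int (p ^ a choose Suc k) - (int (p ^ a - 1 choose k) - (-1) ^ k)"
    by (rule dvd_diff[OF d]) (use Suc in simp)
  ultimately show ?case by metis
qed

definition Zq :: "nat \<Rightarrow> (int \<Rightarrow> int) \<Rightarrow> bool" where
  "Zq q u \<longleftrightarrow> (\<forall>x. (\<Sum>k<q. u (x + int k)) = 0)"

lemma Zq_periodic:
  assumes "Zq q u" shows "u (x + int q) = u x"
proof -
  have "(\<Sum>k<Suc q. u (x + int k)) = u x + (\<Sum>k<q. u (x + 1 + int k))"
    by (subst sum.lessThan_Suc_shift) (simp add: add_ac)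
  moreover have "(\<Sum>k<Suc q. u (x + int k)) = (\<Sum>k<q. u (x + int k)) + u (x + int q)"
    by simp
  moreover have "(\<Sum>k<q. u (x + int k)) = 0" "(\<Sum>k<q. u (x + 1 + int k)) = 0"
    using assms unfolding Zq_def by auto
  ultimately show ?thesis by simp
qed

lemma periodic_fdiff_pow:
  assumes "\<And>x. v (x + Q) = v x" shows "(fdiff ^^ n) v (x + Q) = (fdiff ^^ n) v x"
proof (induction n arbitrary: x)
  case 0 then show ?case using assms by simp
next
  case (Suc n)
  have "(fdiff ^^ n) v (x + 1 + Q) = (fdiff ^^ n) v (x + 1)" by (rule Suc.IH)
  moreover have "(fdiff ^^ Suc n) v y = (fdiff ^^ n) v (y + 1) - (fdiff ^^ n) v y" for y
    by (simp add: fdiff_def[of "(fdiff ^^ n) v"])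
  ultimately show ?case using Suc.IH[of x] by (simp add: add_ac)
qed

lemma Zq_fdiff:
  assumes "\<And>x. v (x + int q) = v x" shows "Zq q (fdiff v)"
  unfolding Zq_def
proof
  fix x
  have "(\<Sum>k<q. fdiff v (x + int k)) = (\<Sum>k<q. (\<lambda>k. v (x + int k)) (Suc k) - (\<lambda>k. v (x + int k)) k)"
    by (simp add: fdiff_def add_ac)
  also have "\<dots> = v (x + int q) - v x" by (subst sum_lessThan_telescope) simp
  finally show "(\<Sum>k<q. fdiff v (x + int k)) = 0" using assms by simp
qed

lemma fdiff_pow_scale:
  "(fdiff ^^ n) (\<lambda>x. c * u x) = (\<lambda>x. c * (fdiff ^^ n) u x)"
  by (induction n) (auto simp: fdiff_def algebra_simps)

lemma key_dvd:
  fixes p a :: nat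
  assumes p: "prime p" and a: "a \<ge> 1" and Z: "Zq (p ^ a) u"
  shows "int p dvd (fdiff ^^ (p ^ a - 1)) u x"
proof -
  define m where "m = p ^ a - 1"
  have pa: "p ^ a > 0" using p by (simp add: prime_gt_0_nat)
  have qm: "p ^ a = Suc m" using pa m_def by simp
  have S: "(\<Sum>k\<le>m. u (x + int k)) = 0"
    using Z unfolding Zq_def qm lessThan_Suc_atMost by simp
  have "(fdiff ^^ m) u x - (-1)^m * (\<Sum>k\<le>m. u (x + int k))
     = (\<Sum>k\<le>m. (-1)^(m-k) * (int (m choose k) - (-1)^k) * u (x + int k))"
    unfolding fdiff_pow_formula sum_distrib_left sum_subtractf[symmetric]
  proof (rule sum.cong)
    fix k assume "k \<in> {..m}"
    then have "(-1::int)^m = (-1)^(m-k) * (-1)^k"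
      by (simp flip: power_add)
    then show "(-1)^(m-k) * int (m choose k) * u (x + int k) - (-1)^m * u (x + int k)
      = (-1)^(m-k) * (int (m choose k) - (-1)^k) * u (x + int k)"
      by (simp add: algebra_simps)
  qed simp
  moreover have "int p dvd (\<Sum>k\<le>m. (-1)^(m-k) * (int (m choose k) - (-1)^k) * u (x + int k))"
  proof (rule dvd_sum)
    fix k assume "k \<in> {..m}"
    then have "k < p ^ a" using qm by simp
    then have "int p dvd int (m choose k) - (-1)^k"
      using choose_minus1_mod[OF p] m_def by simp
    then show "int p dvd (-1)^(m-k) * (int (m choose k) - (-1)^k) * u (x + int k)"
      by simp
  qed
  ultimately show ?thesis using S m_def by simp
qed

lemma key_step:
  fixes p a :: nat
  assumes p: "prime p" and a: "a \<ge> 1" and Z: "Zq (p ^ a) u"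
  shows "\<exists>w. Zq (p ^ a) w \<and> (fdiff ^^ (p ^ a - 1)) u = (\<lambda>x. int p * w x)"
proof -
  define w where "w x = (fdiff ^^ (p ^ a - 1)) u x div int p" for x
  have eq: "(fdiff ^^ (p ^ a - 1)) u = (\<lambda>x. int p * w x)"
    using key_dvd[OF p a Z] by (auto simp: w_def)
  have p2: "p ^ a \<ge> 2"
  proof -
    have "p ^ 1 \<le> p ^ a" using a p by (intro power_increasing) (use prime_ge_2_nat[OF p] in auto)
    then show ?thesis using prime_ge_2_nat[OF p] by simp
  qed
  then have "p ^ a - 1 = Suc (p ^ a - 2)" by simp
  then have "(fdiff ^^ (p ^ a - 1)) u = fdiff ((fdiff ^^ (p ^ a - 2)) u)" by simp
  moreover have "Zq (p ^ a) (fdiff ((fdiff ^^ (p ^ a - 2)) u))"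
    by (rule Zq_fdiff, rule periodic_fdiff_pow, rule Zq_periodic[OF Z])
  ultimately have "Zq (p ^ a) (\<lambda>x. int p * w x)" using eq by simp
  then have "Zq (p ^ a) w" using p
    by (simp add: Zq_def sum_distrib_left[symmetric] prime_gt_0_nat)
  then show ?thesis using eq by blast
qed

theorem lemma3p3:
  fixes p \<alpha> \<beta> :: nat and f :: "int \<Rightarrow> int"
  assumes "prime p" and "\<alpha> \<ge> 1"
    and "periodic_mod (int (p ^ \<alpha>)) f"
  shows "\<forall>x. int (p ^ \<beta>) dvd (fdiff ^^ (\<beta> * (p ^ \<alpha> - 1) + 1)) f x"
proof -
  have per: "\<And>x. f (x + int (p ^ \<alpha>)) = f x" using assms(3) by (simp add: periodic_mod_def)
  have "\<exists>w. Zq (p ^ \<alpha>) w \<and> (fdiff ^^ (\<beta> * (p ^ \<alpha> - 1) + 1)) f = (\<lambda>x. int p ^ \<beta> * w x)"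
  proof (induction \<beta>)
    case 0
    have "Zq (p ^ \<alpha>) (fdiff f)" by (rule Zq_fdiff) (rule per)
    then show ?case by auto
  next
    case (Suc b)
    then obtain w where w: "Zq (p ^ \<alpha>) w"
      "(fdiff ^^ (b * (p ^ \<alpha> - 1) + 1)) f = (\<lambda>x. int p ^ b * w x)" by blast
    obtain w' where w': "Zq (p ^ \<alpha>) w'" "(fdiff ^^ (p ^ \<alpha> - 1)) w = (\<lambda>x. int p * w' x)"
      using key_step[OF assms(1,2) w(1)] by blast
    have "Suc b * (p ^ \<alpha> - 1) + 1 = (p ^ \<alpha> - 1) + (b * (p ^ \<alpha> - 1) + 1)" by simp
    then have "(fdiff ^^ (Suc b * (p ^ \<alpha> - 1) + 1)) f
        = (fdiff ^^ (p ^ \<alpha> - 1)) ((fdiff ^^ (b * (p ^ \<alpha> - 1) + 1)) f)"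
      by (simp only: funpow_add comp_def)
    also have "\<dots> = (\<lambda>x. int p ^ b * (int p * w' x))"
      by (simp only: w(2) fdiff_pow_scale w'(2))
    also have "\<dots> = (\<lambda>x. int p ^ Suc b * w' x)" by (simp add: ac_simps)
    finally show ?case using w'(1) by blast
  qed
  then show ?thesis by auto
qed

end
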